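(* Let $p,q\ge 2$ be relatively prime integers, and for relatively prime positive integers $a,b$ with $b\ge2$ put $$T(a,b)=\sum_{n=1}^{b-1}\frac{\cot(\pi na/b)\cot(\pi n/b)}{\sin^2(\pi n/b)}.$$ Then $$45p\,T(p,q)+45q\,T(q,p)=p^4+q^4-5p^2q^2+3.$$ *)

theory Defs
  imports Complex_Main
begin

definition T :: "int \<Rightarrow> int \<Rightarrow> real" where
  "T a b = (\<Sum>n\<in>{1..b-1}.
      cot (pi * of_int n * of_int a / of_int b) * cot (pi * of_int n / of_int b)
      / (sin (pi * of_int n / of_int b))^2)"

end

theory Submission
  imports Defs "HOL-Complex_Analysis.Complex_Analysis"
begin


lemma gch: fixes a :: complex shows
  "a gchoose 2 = a*(a-1)/2" "a gchoose 3 = a*(a-1)*(a-2)/6"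
  "a gchoose 4 = a*(a-1)*(a-2)*(a-3)/24" "a gchoose 5 = a*(a-1)*(a-2)*(a-3)*(a-4)/120"
  by (simp_all add: gbinomial_Suc numeral_eq_Suc atLeast0_atMost_Suc fact_numeral field_simps) 

lemma coeffs:
  fixes a :: complex and F :: "complex fps" assumes a: "a \<noteq> 0"
  assumes eq: "F * (fps_binomial a - 1) = fps_X * (fps_binomial a + 1)"
  shows "fps_nth F 0 = 2/a" "fps_nth F 1 = 1/a" "fps_nth F 2 = (a^2-1)/(6*a)" "fps_nth F 3 = (1-a^2)/(12*a)"
     "fps_nth F 4 = (20*a^2 - a^4 - 19)/(360*a)"
proof -
  have e: "fps_nth (F * (fps_binomial a - 1)) n = fps_nth (fps_X * (fps_binomial a + 1)) n" for n
    using eq by simp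
  have e1: "fps_nth F 0 * a = 2" using e[of 1] by (simp add: fps_mult_nth)
  have e2: "fps_nth F 0 * (a gchoose 2) + fps_nth F 1 * a = a" using e[of 2]
    by (simp add: fps_mult_nth numeral_eq_Suc atLeast0_atMost_Suc add_ac)
  have e3: "fps_nth F 0 * (a gchoose 3) + fps_nth F 1 * (a gchoose 2) + fps_nth F 2 * a = a gchoose 2" using e[of 3]
    by (simp add: fps_mult_nth numeral_eq_Suc atLeast0_atMost_Suc add_ac)
  have e4: "fps_nth F 0 * (a gchoose 4) + fps_nth F 1 * (a gchoose 3) + fps_nth F 2 * (a gchoose 2) + fps_nth F 3 * a = a gchoose 3" using e[of 4]
    by (simp add: fps_mult_nth numeral_eq_Suc atLeast0_atMost_Suc add_ac)
  have e5: "fps_nth F 0 * (a gchoose 5) + fps_nth F 1 * (a gchoose 4) + fps_nth F 2 * (a gchoose 3) + fps_nth F 3 * (a gchoose 2) + fps_nth F 4 * a = a gchoose 4" using e[of 5]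
    by (simp add: fps_mult_nth numeral_eq_Suc atLeast0_atMost_Suc add_ac)
  show h0: "fps_nth F 0 = 2/a" using e1 a by (simp add: field_simps)
  show h1: "fps_nth F 1 = 1/a" using e2 a unfolding h0 gch by (simp add: field_simps)
  have "fps_nth F 2 * a = (a^2-1)/6" using e3 a unfolding h0 h1 gch by (simp add: field_simps) algebra
  thus h2: "fps_nth F 2 = (a^2-1)/(6*a)" using a by (simp add: field_simps)
  have "fps_nth F 3 * a = (1-a^2)/12" using e4 a unfolding h0 h1 h2 gch by (simp add: field_simps) algebra
  thus h3: "fps_nth F 3 = (1-a^2)/(12*a)" using a by (simp add: field_simps)
  have "fps_nth F 4 * a = (20*a^2 - a^4 - 19)/360" using e5 a unfolding h0 h1 h2 h3 gch by (simp add: field_simps) algebra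
  thus h4: "fps_nth F 4 = (20*a^2 - a^4 - 19)/(360*a)" using a by (simp add: field_simps)
qed

definition U :: "nat \<Rightarrow> complex \<Rightarrow> complex" where
  "U m x = (if x = 0 then 2 / of_nat m else x * ((1+x)^m + 1) / ((1+x)^m - 1))"

definition UF :: "nat \<Rightarrow> complex fps" where
  "UF m = (fps_X * (fps_binomial (of_nat m) + 1)) / (fps_binomial (of_nat m) - 1)"

lemma U_expansion: assumes "m > 0" shows "U m has_fps_expansion UF m"
proof -
  define B :: "complex fps" where "B = fps_binomial (of_nat m)"
  have B: "B = (1 + fps_X) ^ m" unfolding B_def by (rule fps_binomial_of_nat)
  have sG: "subdegree (B - 1) = 1"
    by (rule subdegreeI) (use assms in \<open>auto simp: B_def\<close>)
  have sF: "subdegree (fps_X * (B + 1)) = 1"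
    by (rule subdegreeI) (auto simp: B_def)
  have ne: "B - 1 \<noteq> 0" using sG by auto
  have hB: "(\<lambda>x. (1 + x) ^ m) has_fps_expansion B" unfolding B by (intro fps_expansion_intros)
  have "(\<lambda>x. if x = 0 then 2 / of_nat m else (x * ((1+x)^m + 1)) / ((1+x)^m - 1))
      has_fps_expansion (fps_X * (B + 1)) / (B - 1)"
    by (rule has_fps_expansion_divide) (use sG sF ne assms hB in \<open>auto intro!: fps_expansion_intros simp: B_def\<close>)
  thus ?thesis unfolding U_def[abs_def] UF_def B_def by simp
qed

lemma UF_eq: assumes "m > 0"
  shows "UF m * (fps_binomial (of_nat m) - 1) = fps_X * (fps_binomial (of_nat m) + 1)"
proof -
  define B :: "complex fps" where "B = fps_binomial (of_nat m)"
  have sG: "subdegree (B - 1) = 1"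
    by (rule subdegreeI) (use assms in \<open>auto simp: B_def\<close>)
  have sF: "subdegree (fps_X * (B + 1)) = 1"
    by (rule subdegreeI) (auto simp: B_def)
  have ne: "B - 1 \<noteq> 0" using sG by auto
  show ?thesis unfolding UF_def B_def[symmetric]
    by (rule fps_times_divide_eq) (use ne sG sF in auto)
qed


definition Gf :: "nat \<Rightarrow> nat \<Rightarrow> complex \<Rightarrow> complex" where
  "Gf p q z = ((z^p+1)*(z^q+1)*(z+1)) / ((z^p-1)*(z^q-1)*(z-1)^3)"

lemma Gf_alg: fixes a b x :: complex assumes "x \<noteq> 0" "a - 1 \<noteq> 0" "b - 1 \<noteq> 0"
  shows "(a+1)*(b+1)*(2+x) / ((a-1)*(b-1)*x^3) = x*(a+1)/(a-1) * (x*(b+1)/(b-1)) * (2+x) / x^Suc 4"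
proof -
  have "x*(a+1)/(a-1) * (x*(b+1)/(b-1)) * (2+x) / x^Suc 4 = (x*(a+1)*(x*(b+1))*(2+x)) / ((a-1)*(b-1)*x^Suc 4)"
    by simp
  also have "\<dots> = (a+1)*(b+1)*(2+x) / ((a-1)*(b-1)*x^3)"
  proof -
    have d1: "(a-1)*(b-1)*x^Suc 4 \<noteq> 0" "(a-1)*(b-1)*x^3 \<noteq> 0" using assms by auto
    show ?thesis by (subst frac_eq_eq[OF d1]) (simp add: power_Suc power3_eq_cube, algebra)
  qed
  finally show ?thesis by simp
qed

lemma Gf_shift: assumes "x \<noteq> 0" shows "Gf p q (1 + x) = U p x * U q x * (2 + x) / x ^ Suc 4"
proof -
  have *: "1 + x - 1 = x" by simp
  show ?thesis
  proof (cases "(1+x)^p - 1 = 0 \<or> (1+x)^q - 1 = 0")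
    case True thus ?thesis using assms unfolding Gf_def U_def * by auto
  next
    case False
    hence a: "(1+x)^p - 1 \<noteq> 0" "(1+x)^q - 1 \<noteq> 0" by auto
    show ?thesis using Gf_alg[OF assms a] assms unfolding Gf_def U_def * by (simp add: add.assoc)
  qed
qed

lemma m3: "fps_nth (f*g) 3 = fps_nth f 0 * fps_nth g 3 + fps_nth f 1 * fps_nth g 2 + fps_nth f 2 * fps_nth g 1 + fps_nth f 3 * fps_nth g 0"
  by (simp add: fps_mult_nth numeral_eq_Suc atLeast0_atMost_Suc add_ac)
lemma m4: "fps_nth (f*g) 4 = fps_nth f 0 * fps_nth g 4 + fps_nth f 1 * fps_nth g 3 + fps_nth f 2 * fps_nth g 2 + fps_nth f 3 * fps_nth g 1 + fps_nth f 4 * fps_nth g 0"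
  by (simp add: fps_mult_nth numeral_eq_Suc atLeast0_atMost_Suc add_ac)
lemma t4: fixes f :: "complex fps" shows "fps_nth (f * (2 + fps_X)) 4 = 2 * fps_nth f 4 + fps_nth f 3"
  by (simp add: fps_mult_nth numeral_eq_Suc atLeast0_atMost_Suc fps_numeral_nth)

lemma res1: assumes "p > 0" "q > 0"
  shows "residue (Gf p q) 1 = - (of_nat p^4 + of_nat q^4 - 5 * of_nat p^2 * of_nat q^2 + 3) / (90 * of_nat p * of_nat q)"
proof -
  have "residue (Gf p q) 1 = residue (\<lambda>x. Gf p q (1 + x)) 0" by (rule residue_shift_0)
  also have "\<dots> = residue (\<lambda>x. (U p x * U q x * (2 + x)) / x ^ Suc 4) 0"
    by (rule residue_cong) (auto simp: eventually_at_filter Gf_shift)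
  also have "\<dots> = fps_nth (UF p * UF q * (2 + fps_X)) 4"
    by (rule residue_fps_expansion_over_power_at_0)
       (use assms in \<open>intro fps_expansion_intros U_expansion\<close>)
  also have "\<dots> = - (of_nat p^4 + of_nat q^4 - 5 * of_nat p^2 * of_nat q^2 + 3) / (90 * of_nat p * of_nat q)"
  proof -
    note cp = coeffs[OF _ UF_eq[OF assms(1)]] and cq = coeffs[OF _ UF_eq[OF assms(2)]]
    have ap: "(of_nat p :: complex) \<noteq> 0" "(of_nat q :: complex) \<noteq> 0" using assms by auto
    show ?thesis
      unfolding t4 unfolding m3 m4 cp[OF ap(1)] cq[OF ap(2)]
      by (simp add: divide_simps ap) algebra
  qed
  finally show ?thesis .
qed


lemma Gf_bound: assumes "p \<ge> 1" "q \<ge> 1" "norm z = R" "R \<ge> 2"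
  shows "norm (Gf p q z) \<le> 256 / R^2"
proof -
  have Rp: "R^p \<ge> 2" "R^q \<ge> 2"
    using assms order_trans[OF assms(4) self_le_power[of R]] by auto
  have n1: "norm (z^m + 1) \<le> 2*R^m" if "R^m \<ge> 2" for m
    using norm_triangle_ineq[of "z^m" 1] that assms(3) by (simp add: norm_power)
  have d1: "norm (z^m - 1) \<ge> R^m/2" if "R^m \<ge> 2" for m
    using norm_triangle_ineq2[of "z^m" 1] that assms(3) by (simp add: norm_power)
  have n3: "norm (z + 1) \<le> 2*R" using norm_triangle_ineq[of z 1] assms by simp
  have d3: "norm (z - 1) \<ge> R/2" using norm_triangle_ineq2[of z 1] assms by simp
  have "norm (Gf p q z) = norm (z^p+1) * norm (z^q+1) * norm (z+1) /
          (norm (z^p-1) * norm (z^q-1) * norm (z-1)^3)"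
    unfolding Gf_def by (simp add: norm_mult norm_divide norm_power)
  also have "\<dots> \<le> (2*R^p) * (2*R^q) * (2*R) / ((R^p/2) * (R^q/2) * (R/2)^3)"
  proof (rule frac_le)
    show "0 \<le> (2*R^p) * (2*R^q) * (2*R)" using assms by simp
    show "norm (z^p+1) * norm (z^q+1) * norm (z+1) \<le> (2*R^p) * (2*R^q) * (2*R)"
      using n1[OF Rp(1)] n1[OF Rp(2)] n3 Rp by (intro mult_mono) auto
    show "0 < (R^p/2) * (R^q/2) * (R/2)^3" using assms by simp
    show "(R^p/2) * (R^q/2) * (R/2)^3 \<le> norm (z^p-1) * norm (z^q-1) * norm (z-1)^3"
      using d1[OF Rp(1)] d1[OF Rp(2)] d3 assms by (intro mult_mono power_mono) auto
  qed
  also have "\<dots> = 256 / R^2" using assms by (simp add: field_simps power2_eq_square power3_eq_cube)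
  finally show ?thesis .
qed


lemma res_sum_zero: assumes "p \<ge> 1" "q \<ge> 1"
  shows "(\<Sum>z\<in>{z. z^q = 1} \<union> {z. z^p = 1}. residue (Gf p q) z) = 0"
proof -
  define pts :: "complex set" where "pts = {z. z^q = 1} \<union> {z. z^p = 1}"
  define S where "S = (\<Sum>z\<in>pts. residue (Gf p q) z)"
  have fin: "finite pts" unfolding pts_def using assms by (auto intro: finite_roots_unity)
  have normpts: "norm z = 1" if "z \<in> pts" for z
    using that assms power_eq_1_iff[of z q] power_eq_1_iff[of z p] unfolding pts_def by auto
  have holo: "Gf p q holomorphic_on UNIV - pts"
  proof -
    have "z^p - 1 \<noteq> 0 \<and> z^q - 1 \<noteq> 0 \<and> z - 1 \<noteq> 0" if "z \<notin> pts" for z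
      using that unfolding pts_def by auto
    thus ?thesis unfolding Gf_def[abs_def] by (intro holomorphic_intros) auto
  qed
  have bound: "norm S \<le> 256 / R" if R: "R \<ge> 2" for R
  proof -
    have img: "path_image (circlepath 0 R) \<subseteq> UNIV - pts"
      using normpts R by (auto simp: path_image_circlepath)
    have "contour_integral (circlepath 0 R) (Gf p q) =
          2 * pi * \<i> * (\<Sum>z\<in>pts. winding_number (circlepath 0 R) z * residue (Gf p q) z)"
      by (rule Residue_theorem[OF _ _ fin holo]) (use img in auto)
    also have "(\<Sum>z\<in>pts. winding_number (circlepath 0 R) z * residue (Gf p q) z) = S"
      unfolding S_def
      by (intro sum.cong refl) (use normpts R in \<open>auto simp: winding_number_circlepath\<close>)
    finally have ci: "contour_integral (circlepath 0 R) (Gf p q) = 2 * pi * \<i> * S" .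
    have "continuous_on (path_image (circlepath 0 R)) (Gf p q)"
      using holomorphic_on_imp_continuous_on[OF holo] img continuous_on_subset by blast
    hence "(Gf p q has_contour_integral 2 * pi * \<i> * S) (circlepath 0 R)"
      using ci has_contour_integral_integral contour_integrable_continuous_circlepath by metis
    hence "norm (2 * pi * \<i> * S) \<le> 256 / R^2 * (2 * pi * R)"
      by (rule has_contour_integral_bound_circlepath) (use R Gf_bound assms in auto)
    hence "2 * pi * norm S \<le> 2 * pi * (256 / R)"
      using R by (simp add: norm_mult power2_eq_square field_simps)
    thus ?thesis using pi_gt_zero by (smt (verit) mult_le_cancel_left_pos)
  qed
  show ?thesis
  proof (rule ccontr)
    assume "(\<Sum>z\<in>{z. z^q = 1} \<union> {z. z^p = 1}. residue (Gf p q) z) \<noteq> 0"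
    hence nz: "norm S > 0" unfolding S_def pts_def by simp
    define R where "R = max 2 (512 / norm S)"
    have "norm S \<le> 256 / R" using bound[of R] by (simp add: R_def)
    also have "\<dots> \<le> 256 / (512 / norm S)" using nz by (intro divide_left_mono) (auto simp: R_def)
    also have "\<dots> = norm S / 2" using nz by simp
    finally show False using nz by simp
  qed
qed


lemma res_simple:
  assumes f: "f holomorphic_on UNIV" and g: "g holomorphic_on UNIV"
    and d: "(g has_field_derivative g') (at z)" and gz: "g z = 0" and g': "g' \<noteq> 0"
    and Z: "finite Z" "\<And>w. g w = 0 \<Longrightarrow> w \<in> Z"
  shows "residue (\<lambda>w. f w / g w) z = f z / g'"
proof (cases "f z = 0")
  case False
  show ?thesis
    by (rule residue_simple_pole_deriv[OF f g]) (use d gz g' False in auto)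
next
  case True
  define s where "s = UNIV - (Z - {z})"
  have s: "open s" "z \<in> s" unfolding s_def using Z by (auto intro: finite_imp_closed)
  have h: "(\<lambda>w. h w / g w) holomorphic_on s - {z}" if "h holomorphic_on UNIV" for h
  proof -
    have "g w \<noteq> 0" if "w \<in> s - {z}" for w using that Z unfolding s_def by auto
    thus ?thesis using that g by (intro holomorphic_intros) (auto intro: holomorphic_on_subset)
  qed
  have f1: "(\<lambda>w. f w + 1) holomorphic_on UNIV" using f by (intro holomorphic_intros)
  have "(\<lambda>w. f w / g w) = (\<lambda>w. (f w + 1) / g w + (-1) / g w)"
    by (auto simp: field_simps add_divide_distrib[symmetric])
  moreover have ra: "residue (\<lambda>w. (f w + 1) / g w + (-1) / g w) z = residue (\<lambda>w. (f w + 1) / g w) z + residue (\<lambda>w. (-1) / g w) z"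
    by (rule residue_add[OF s h[OF f1] h]) auto
  ultimately have "residue (\<lambda>w. f w / g w) z = residue (\<lambda>w. (f w + 1) / g w) z + residue (\<lambda>w. (-1) / g w) z"
    by (simp only:)
  also have "residue (\<lambda>w. (f w + 1) / g w) z = (f z + 1) / g'"
    by (rule residue_simple_pole_deriv[OF f1 g]) (use d gz g' True in auto)
  also have "residue (\<lambda>w. (-1) / g w) z = (-1) / g'"
    by (rule residue_simple_pole_deriv[OF _ g]) (use d gz g' True in auto)
  finally show ?thesis using True by (simp add: field_simps)
qed

lemma Gf_sym: "Gf p q = Gf q p"
  unfolding Gf_def by (auto simp: mult_ac)

lemma res_q: assumes "p \<ge> 1" "q \<ge> 1" "\<beta>^q = 1" "\<beta> \<noteq> 1" "\<beta>^p \<noteq> 1"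
  shows "residue (Gf p q) \<beta> = 2*(\<beta>^p+1)*(\<beta>+1) / ((\<beta>^p-1) * (of_nat q * \<beta>^(q-1)) * (\<beta>-1)^3)"
proof -
  have "residue (\<lambda>z. ((z^p+1)*(z^q+1)*(z+1)) / ((z^p-1)*(z^q-1)*(z-1)^3)) \<beta>
        = ((\<beta>^p+1)*(\<beta>^q+1)*(\<beta>+1)) / ((\<beta>^p-1) * (of_nat q * \<beta>^(q-1)) * (\<beta>-1)^3)"
  proof (rule res_simple)
    show "((\<lambda>z. (z^p-1)*(z^q-1)*(z-1)^3) has_field_derivative
            ((\<beta>^p-1) * (of_nat q * \<beta>^(q-1)) * (\<beta>-1)^3)) (at \<beta>)"
      by (rule derivative_eq_intros refl | simp add: assms)+
    show "finite ({z. z^q = 1} \<union> {z. z^p = 1} :: complex set)"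
      using assms by (auto intro: finite_roots_unity)
    have "\<beta> \<noteq> 0" using assms by (cases q) auto
    thus "(\<beta>^p-1) * (of_nat q * \<beta>^(q-1)) * (\<beta>-1)^3 \<noteq> 0"
      using assms by auto
  qed (use assms in \<open>auto intro!: holomorphic_intros simp: power_0_left split: if_splits\<close>)
  moreover have b2: "\<beta>^q + 1 = 2" using assms by simp
  ultimately show ?thesis unfolding Gf_def[abs_def] b2 by (simp only: mult_ac)
qed


lemma alg_i: fixes a b :: complex
  shows "(a + \<i>*b)^2 + (a^2+b^2) = 2*a*(a+\<i>*b)" "(a + \<i>*b)^2 - (a^2+b^2) = 2*\<i>*b*(a+\<i>*b)"
  by (simp_all add: power2_eq_square algebra_simps)

lemma cis_sq: fixes t :: real
  shows "cis (2*t) + 1 = 2 * of_real (cos t) * cis t" "cis (2*t) - 1 = 2 * \<i> * of_real (sin t) * cis t"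
proof -
  have e: "cis (2*t) = cis t ^ 2" unfolding power2_eq_square cis_mult by (simp only: mult_2)
  have c: "cis t = of_real (cos t) + \<i> * of_real (sin t)" by (simp add: cis.ctr complex_eq_iff)
  have one: "(of_real (cos t))^2 + (of_real (sin t))^2 = (1::complex)"
    by (metis of_real_add of_real_1 of_real_power sin_cos_squared_add2)
  show "cis (2*t) + 1 = 2 * of_real (cos t) * cis t"
    using alg_i(1)[of "of_real (cos t)" "of_real (sin t)"] unfolding one e c .
  show "cis (2*t) - 1 = 2 * \<i> * of_real (sin t) * cis t"
    using alg_i(2)[of "of_real (cos t)" "of_real (sin t)"] unfolding one e c .
qed

lemma cot_cis: fixes t :: real
  shows "complex_of_real (cot t) = \<i> * (cis (2*t) + 1) / (cis (2*t) - 1)"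
proof (cases "sin t = 0")
  case True thus ?thesis by (simp add: cot_def cis_sq)
next
  case False
  have nz: "2 * \<i> * cis t \<noteq> 0" by simp
  have "\<i> * (cis (2*t) + 1) / (cis (2*t) - 1) = ((2 * \<i> * cis t) * of_real (cos t)) / ((2 * \<i> * cis t) * of_real (sin t))"
    unfolding cis_sq by (simp only: mult_ac)
  also have "\<dots> = of_real (cos t) / of_real (sin t)" by (rule mult_divide_mult_cancel_left[OF nz])
  finally have calc: "\<i> * (cis (2*t) + 1) / (cis (2*t) - 1) = of_real (cos t) / of_real (sin t)" .
  have c: "complex_of_real (cot t) = of_real (cos t) / of_real (sin t)" by (simp add: cot_def)
  show ?thesis unfolding c by (rule sym[OF calc])
qed

lemma sin2_cis: fixes t :: real
  shows "complex_of_real ((sin t)^2) = (cis (2*t) - 1)^2 / (- 4 * cis (2*t))"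
proof -
  have w: "cis (2*t) = cis t ^ 2" unfolding power2_eq_square cis_mult by (simp only: mult_2)
  have nz: "- 4 * cis t ^ 2 \<noteq> 0" by simp
  have "(2 * \<i> * of_real (sin t) * cis t)^2 = (- 4 * cis t ^ 2) * of_real ((sin t)^2)"
    by (simp add: power_mult_distrib)
  hence "(cis (2*t) - 1)^2 / (- 4 * cis (2*t)) = (- 4 * cis t ^ 2) * of_real ((sin t)^2) / (- 4 * cis t ^ 2)"
    unfolding cis_sq by (simp only: w)
  also have "\<dots> = of_real ((sin t)^2)" by (rule nonzero_mult_div_cancel_left[OF nz])
  finally show ?thesis by (rule sym)
qed


lemma coprime_root: fixes z :: complex
  assumes "coprime p q" "p > 0" "z^p = 1" "z^q = 1" shows "z = 1"
proof -
  obtain x y where xy: "p * x = q * y + gcd p q" using bezout_nat[of p q] assms by auto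
  hence xy': "p * x = q * y + 1" using assms by simp
  have "z = z ^ (q*y + 1)" using assms by (simp add: power_mult)
  also have "\<dots> = z ^ (p * x)" using xy' by simp
  also have "\<dots> = 1" using assms by (simp add: power_mult)
  finally show ?thesis .
qed

definition tm :: "nat \<Rightarrow> nat \<Rightarrow> nat \<Rightarrow> real" where
  "tm p q n = cot (pi * real n * real p / real q) * cot (pi * real n / real q) / (sin (pi * real n / real q))^2"

lemma alg2: fixes A B C D b Q :: complex
  assumes "B \<noteq> 0" "D \<noteq> 0" "b \<noteq> 0" "Q \<noteq> 0"
  shows "2*A*C/(B*(Q*inverse b)*D^3) = (\<i>*A/B)*(\<i>*C/D)/(D^2/(-4*b))/(2*Q)"
  using assms by (simp add: field_simps power2_eq_square power3_eq_cube)

lemma term_res: fixes \<beta> :: complex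
  assumes "p \<ge> 1" "q \<ge> 1" "\<beta> = cis (2 * pi * real n / real q)" "\<beta>^q = 1" "\<beta> \<noteq> 1" "\<beta>^p \<noteq> 1"
  shows "residue (Gf p q) \<beta> = of_real (tm p q n) / (2 * of_nat q)"
proof -
  define t where "t = pi * real n / real q"
  have b: "cis (2*t) = \<beta>" using assms(3) by (simp add: t_def mult.assoc)
  have bp: "cis (2*(pi * real n * real p / real q)) = \<beta>^p"
  proof -
    have "\<beta>^p = cis (real p * (2 * pi * real n / real q))" unfolding assms(3) by (rule Complex.DeMoivre)
    also have "real p * (2 * pi * real n / real q) = 2*(pi * real n * real p / real q)" by simp
    finally show ?thesis by simp
  qed
  have tm: "complex_of_real (tm p q n) = (\<i> * (\<beta>^p + 1) / (\<beta>^p - 1)) * (\<i> * (\<beta> + 1) / (\<beta> - 1)) / ((\<beta> - 1)^2 / (- 4 * \<beta>))"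
    unfolding tm_def of_real_mult of_real_divide cot_cis sin2_cis bp t_def[symmetric] b ..
  have bnz: "\<beta> \<noteq> 0" using assms(3) by simp
  have bq: "\<beta>^(q-1) = inverse \<beta>"
  proof -
    have "\<beta>^(q-1) * \<beta> = 1" using power_minus_mult[of q \<beta>] assms by simp
    hence "inverse \<beta> = \<beta>^(q-1)" by (intro inverse_unique) (simp add: mult.commute)
    thus ?thesis by simp
  qed
  have nz: "\<beta> - 1 \<noteq> 0" "\<beta>^p - 1 \<noteq> 0" "(of_nat q :: complex) \<noteq> 0" using assms by auto
  show ?thesis unfolding res_q[OF assms(1,2,4,5,6)] tm bq
    by (rule alg2[OF nz(2,1) bnz nz(3)])
qed


lemma sum_roots: assumes "p \<ge> 1" "q \<ge> 2" "coprime p q"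
  shows "(\<Sum>z\<in>{z. z^q = 1}. residue (Gf p q) z) = residue (Gf p q) 1 + of_real (\<Sum>n\<in>{1..<q}. tm p q n) / (2 * of_nat q)"
proof -
  define f where "f = (\<lambda>k::nat. cis (2 * pi * real k / real q))"
  have bij: "bij_betw f {..<q} {z. z^q = 1}" unfolding f_def by (rule Complex.bij_betw_roots_unity) (use assms in auto)
  have "(\<Sum>z\<in>{z. z^q = 1}. residue (Gf p q) z) = (\<Sum>k<q. residue (Gf p q) (f k))"
    by (rule sum.reindex_bij_betw[OF bij, symmetric])
  also have "\<dots> = (\<Sum>k\<in>{0..<q}. residue (Gf p q) (f k))" by (simp add: atLeast0LessThan)
  also have "\<dots> = residue (Gf p q) (f 0) + (\<Sum>k\<in>{1..<q}. residue (Gf p q) (f k))"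
    using assms by (subst sum.atLeast_Suc_lessThan) auto
  also have "(\<Sum>k\<in>{1..<q}. residue (Gf p q) (f k)) = (\<Sum>k\<in>{1..<q}. of_real (tm p q k) / (2 * of_nat q))"
  proof (rule sum.cong[OF refl])
    fix k assume k: "k \<in> {1..<q}"
    have fq: "f k ^ q = 1" using bij k by (auto dest: bij_betwE)
    have f1: "f k \<noteq> 1"
    proof
      assume "f k = 1"
      hence "f k = f 0" by (simp add: f_def)
      with bij k have "k = 0" unfolding bij_betw_def inj_on_def by (metis lessThan_iff atLeastLessThan_iff le0 order_le_less_trans)
      with k show False by simp
    qed
    have fp: "f k ^ p \<noteq> 1" using coprime_root[of q p "f k"] assms fq f1 by (auto simp: coprime_commute)
    show "residue (Gf p q) (f k) = of_real (tm p q k) / (2 * of_nat q)"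
      by (rule term_res) (use assms fq f1 fp in \<open>auto simp: f_def\<close>)
  qed
  also have "\<dots> = of_real (\<Sum>n\<in>{1..<q}. tm p q n) / (2 * of_nat q)"
    by (simp add: sum_divide_distrib)
  finally show ?thesis by (simp add: f_def)
qed

lemma main_nat: fixes p q :: nat assumes "p \<ge> 2" "q \<ge> 2" "coprime p q"
  shows "45 * real p * (\<Sum>n\<in>{1..<q}. tm p q n) + 45 * real q * (\<Sum>n\<in>{1..<p}. tm q p n)
         = real p^4 + real q^4 - 5*real p^2*real q^2 + 3"
proof -
  define r where "r = residue (Gf p q)"
  define A :: "complex set" where "A = {z. z^q = 1}"
  define B :: "complex set" where "B = {z. z^p = 1}"
  have fin: "finite A" "finite B" unfolding A_def B_def using assms by (auto intro: finite_roots_unity)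
  have AB: "A \<inter> B = {1}" unfolding A_def B_def using coprime_root[OF assms(3)] assms by auto
  have "sum r (A \<union> B) + sum r (A \<inter> B) = sum r A + sum r B" by (rule sum.union_inter[OF fin])
  note U = this
  have z: "sum r (A \<union> B) = 0" unfolding r_def A_def B_def by (rule res_sum_zero) (use assms in auto)
  have sA: "sum r A = r 1 + of_real (\<Sum>n\<in>{1..<q}. tm p q n) / (2 * of_nat q)"
    unfolding r_def A_def by (rule sum_roots) (use assms in auto)
  have sB: "sum r B = r 1 + of_real (\<Sum>n\<in>{1..<p}. tm q p n) / (2 * of_nat p)"
    unfolding r_def B_def Gf_sym[of p q] by (rule sum_roots) (use assms in \<open>auto simp: coprime_commute\<close>)
  have r1: "r 1 = - (of_nat p^4 + of_nat q^4 - 5 * of_nat p^2 * of_nat q^2 + 3) / (90 * of_nat p * of_nat q)"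
    unfolding r_def by (rule res1) (use assms in auto)
  have e1: "0 + r 1 = (r 1 + of_real (\<Sum>n\<in>{1..<q}. tm p q n) / (2 * of_nat q)) + (r 1 + of_real (\<Sum>n\<in>{1..<p}. tm q p n) / (2 * of_nat p))"
    using U AB unfolding z sA sB by simp
  have eq: "of_real (\<Sum>n\<in>{1..<q}. tm p q n) / (2 * of_nat q) + of_real (\<Sum>n\<in>{1..<p}. tm q p n) / (2 * of_nat p)
      = (of_nat p^4 + of_nat q^4 - 5 * of_nat p^2 * of_nat q^2 + 3) / (90 * of_nat p * of_nat q :: complex)"
    using e1 r1 by algebra
  have pq: "(of_nat p :: complex) \<noteq> 0" "(of_nat q :: complex) \<noteq> 0" using assms by auto
  define X where "X = complex_of_real (\<Sum>n\<in>{1..<q}. tm p q n)"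
  define Y where "Y = complex_of_real (\<Sum>n\<in>{1..<p}. tm q p n)"
  define E where "E = (of_nat p^4 + of_nat q^4 - 5 * of_nat p^2 * of_nat q^2 + 3 :: complex)"
  have eq': "X / (2 * of_nat q) + Y / (2 * of_nat p) = E / (90 * of_nat p * of_nat q)"
    using eq unfolding X_def Y_def E_def .
  have h1: "(X / (2 * of_nat q) + Y / (2 * of_nat p)) * (90 * of_nat p * of_nat q) = E"
    unfolding eq' using pq by simp
  have h2: "(X / (2 * of_nat q) + Y / (2 * of_nat p)) * (90 * of_nat p * of_nat q) = 45 * of_nat p * X + 45 * of_nat q * Y"
    using pq by (simp add: field_simps)
  have "complex_of_real (45 * real p * (\<Sum>n\<in>{1..<q}. tm p q n) + 45 * real q * (\<Sum>n\<in>{1..<p}. tm q p n))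
       = complex_of_real (real p^4 + real q^4 - 5*real p^2*real q^2 + 3)"
    using h1 h2 unfolding X_def Y_def E_def by simp
  thus ?thesis using of_real_eq_iff by blast
qed

lemma T_nat: "T (int P) (int Q) = (\<Sum>n\<in>{1..<Q}. tm P Q n)"
proof -
  have img: "int ` {1..<Q} = {1..int Q - 1}"
  proof
    show "int ` {1..<Q} \<subseteq> {1..int Q - 1}" by auto
    show "{1..int Q - 1} \<subseteq> int ` {1..<Q}"
    proof
      fix x assume x: "x \<in> {1..int Q - 1}"
      hence "x = int (nat x)" "nat x \<in> {1..<Q}" by auto
      thus "x \<in> int ` {1..<Q}" by (rule image_eqI)
    qed
  qed
  have "T (int P) (int Q) = (\<Sum>n\<in>int ` {1..<Q}. cot (pi * of_int n * of_int (int P) / of_int (int Q)) * cot (pi * of_int n / of_int (int Q))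
      / (sin (pi * of_int n / of_int (int Q)))^2)"
    unfolding T_def img ..
  also have "\<dots> = (\<Sum>n\<in>{1..<Q}. tm P Q n)"
    by (subst sum.reindex) (auto simp: tm_def)
  finally show ?thesis .
qed

theorem mainTheorem16:
  fixes p q :: int
  assumes "p \<ge> 2" and "q \<ge> 2" and "coprime p q"
  shows "45 * of_int p * T p q + 45 * of_int q * T q p
         = of_int (p^4 + q^4 - 5 * p^2 * q^2 + 3)"
proof -
  obtain P where P: "p = int P" using assms(1) by (metis nonneg_int_cases order_trans zero_le_numeral)
  obtain Q where Q: "q = int Q" using assms(2) by (metis nonneg_int_cases order_trans zero_le_numeral)
  have c: "coprime P Q" using assms(3) unfolding P Q by simp
  have "45 * real P * (\<Sum>n\<in>{1..<Q}. tm P Q n) + 45 * real Q * (\<Sum>n\<in>{1..<P}. tm Q P n)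
         = real P^4 + real Q^4 - 5*real P^2*real Q^2 + 3"
    by (rule main_nat) (use assms c in \<open>auto simp: P Q\<close>)
  thus ?thesis unfolding P Q T_nat by simp
qed
end
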